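(* Let $\mathcal H$ be a 3-dimensional Hilbert space with orthonormal basis $|1,1\rangle,|2,1\rangle,|2,2\rangle$, let $E_1<E_2$ be real, and let $$H_0=E_1|1,1\rangle\langle1,1|+E_2\big(|2,1\rangle\langle2,1|+|2,2\rangle\langle2,2|\big),\qquad iH_I=d_1x_{11,21}+d_2x_{11,22},$$ with real $d_1,d_2$ not both zero. Then the real Lie algebra $L_0$ generated by $iH_0$ and $iH_I$ is 4-dimensional and isomorphic to $\mathfrak{su}(2)\oplus\mathfrak{u}(1)$; in particular $L_0$ does not contain $\mathfrak{su}(3)$, so the system with Hamiltonian $H_0+f(t)H_I$ is not completely controllable.
   Context: $x_{11,2k}=i\big(|1,1\rangle\langle2,k|+|2,k\rangle\langle1,1|\big)$ for $k=1,2$. The system with Hamiltonian $H_0+f(t)H_I$ ($f$ a real control field) is called completely controllable if the Lie algebra generated by $iH_0$ and $iH_I$ contains $\mathfrak{su}(3)$. *)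

theory Defs
  imports "HOL-Analysis.Analysis"
begin

text \<open>Complex n x n matrices are represented as complex^'n^'n (a real vector space).
 For the 3-level system the basis |1,1>, |2,1>, |2,2> is indexed by 0, 1, 2 :: 3.\<close>

definition ketbra :: "'n::finite \<Rightarrow> 'n \<Rightarrow> complex^'n^'n" where
  "ketbra a b = (\<chi> i j. if i = a \<and> j = b then 1 else 0)"

definition cscale :: "complex \<Rightarrow> complex^'n^'m \<Rightarrow> complex^'n^'m" where
  "cscale c M = (\<chi> i j. c * M $ i $ j)"

definition mcomm :: "complex^'n^'n \<Rightarrow> complex^'n^'n \<Rightarrow> complex^'n^'n" where
  "mcomm A B = A ** B - B ** A"

definition lie_gen :: "(complex^'n^'n) set \<Rightarrow> (complex^'n^'n) set" where
  "lie_gen S = \<Inter>{L. subspace L \<and> S \<subseteq> L \<and> (\<forall>A\<in>L. \<forall>B\<in>L. mcomm A B \<in> L)}"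

definition su :: "(complex^'n::finite^'n) set" where
  "su = {A. (\<forall>i j. A $ i $ j = - cnj (A $ j $ i)) \<and> (\<Sum>i\<in>UNIV. A $ i $ i) = 0}"

text \<open>u(1): skew-Hermitian 1x1 matrices, i.e. purely imaginary numbers (abelian).\<close>
definition u1 :: "complex set" where
  "u1 = {c. Re c = 0}"

definition su2_u1 :: "((complex^2^2) \<times> complex) set" where
  "su2_u1 = su \<times> u1"

definition su2_u1_bracket :: "(complex^2^2) \<times> complex \<Rightarrow> (complex^2^2) \<times> complex \<Rightarrow> (complex^2^2) \<times> complex" where
  "su2_u1_bracket p q = (mcomm (fst p) (fst q), 0)"

definition lie_iso_to :: "(complex^'n^'n \<Rightarrow> 'b::real_vector) \<Rightarrow> (complex^'n^'n) set \<Rightarrow> 'b set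
    \<Rightarrow> ('b \<Rightarrow> 'b \<Rightarrow> 'b) \<Rightarrow> bool" where
  "lie_iso_to \<phi> L M br \<longleftrightarrow> bij_betw \<phi> L M \<and>
     (\<forall>x\<in>L. \<forall>y\<in>L. \<forall>a b::real. \<phi> (a *\<^sub>R x + b *\<^sub>R y) = a *\<^sub>R \<phi> x + b *\<^sub>R \<phi> y) \<and>
     (\<forall>x\<in>L. \<forall>y\<in>L. \<phi> (mcomm x y) = br (\<phi> x) (\<phi> y))"

definition H0 :: "real \<Rightarrow> real \<Rightarrow> complex^3^3" where
  "H0 E1 E2 = E1 *\<^sub>R ketbra 0 0 + E2 *\<^sub>R (ketbra 1 1 + ketbra 2 2)"

definition xgen :: "3 \<Rightarrow> complex^3^3" where
  "xgen k = cscale \<i> (ketbra 0 k + ketbra k 0)"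

definition iHI :: "real \<Rightarrow> real \<Rightarrow> complex^3^3" where
  "iHI d1 d2 = d1 *\<^sub>R xgen 1 + d2 *\<^sub>R xgen 2"

definition completely_controllable :: "complex^'n^'n \<Rightarrow> complex^'n^'n \<Rightarrow> bool" where
  "completely_controllable H HI \<longleftrightarrow> su \<subseteq> lie_gen {cscale \<i> H, cscale \<i> HI}"

end

theory Submission imports Defs begin


definition fm :: "real \<Rightarrow> real \<Rightarrow> real \<Rightarrow> real \<Rightarrow> real \<Rightarrow> real \<Rightarrow> real \<Rightarrow> real \<Rightarrow> complex^3^3" where
"fm E1 E2 d1 d2 a b c e = (\<chi> i j.
   if i = 0 \<and> j = 0 then \<i> * of_real (a*E1 - e*(d1^2+d2^2))
   else if i = 1 \<and> j = 1 then \<i> * of_real (a*E2 + e*d1^2)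
   else if i = 2 \<and> j = 2 then \<i> * of_real (a*E2 + e*d2^2)
   else if (i = 1 \<and> j = 2) \<or> (i = 2 \<and> j = 1) then \<i> * of_real (e*d1*d2)
   else if i = 0 \<and> j = 1 then \<i> * of_real (b*d1) + of_real (c*d1)
   else if i = 1 \<and> j = 0 then \<i> * of_real (b*d1) - of_real (c*d1)
   else if i = 0 \<and> j = 2 then \<i> * of_real (b*d2) + of_real (c*d2)
   else \<i> * of_real (b*d2) - of_real (c*d2))"

lemma gen_G: "cscale \<i> (H0 E1 E2) = fm E1 E2 d1 d2 1 0 0 0"
  unfolding cscale_def H0_def ketbra_def fm_def
  by (simp add: vec_eq_iff forall_3 complex_eq_iff)

lemma gen_X: "iHI d1 d2 = fm E1 E2 d1 d2 0 1 0 0"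
  unfolding cscale_def iHI_def xgen_def ketbra_def fm_def
  by (simp add: vec_eq_iff forall_3 complex_eq_iff)

lemma fm_lin: "x *\<^sub>R fm E1 E2 d1 d2 a b c e + y *\<^sub>R fm E1 E2 d1 d2 a' b' c' e'
   = fm E1 E2 d1 d2 (x*a+y*a') (x*b+y*b') (x*c+y*c') (x*e+y*e')"
  unfolding fm_def
  by (simp add: vec_eq_iff forall_3 complex_eq_iff algebra_simps)

lemma fm_0: "fm E1 E2 d1 d2 0 0 0 0 = 0"
  unfolding fm_def by (simp add: vec_eq_iff forall_3 complex_eq_iff)


lemma comm_fm:
  "mcomm (fm E1 E2 d1 d2 a b c e) (fm E1 E2 d1 d2 a' b' c' e') =
   fm E1 E2 d1 d2 0
     (-(E2-E1)*(a*c' - c*a') + 2*(d1^2+d2^2)*(c*e' - e*c'))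
     ((E2-E1)*(a*b' - b*a') - 2*(d1^2+d2^2)*(b*e' - e*b'))
     (2*(b*c' - c*b'))"
  unfolding mcomm_def fm_def
  apply (simp add: vec_eq_iff forall_3 sum_3 matrix_matrix_mult_def)
  apply (simp add: complex_eq_iff algebra_simps power2_eq_square)
  done

lemma fm_zero:
  assumes d: "d1 \<noteq> 0 \<or> d2 \<noteq> 0" and E: "E1 < E2" and z: "fm E1 E2 d1 d2 a b c e = 0"
  shows "a = 0 \<and> b = 0 \<and> c = 0 \<and> e = 0"
proof -
  have h: "\<And>i j. fm E1 E2 d1 d2 a b c e $ i $ j = 0" using z by simp
  have 1: "b*d1 = 0" "c*d1 = 0" using h[of 0 1] by (simp_all add: fm_def complex_eq_iff)
  have 2: "b*d2 = 0" "c*d2 = 0" using h[of 0 2] by (simp_all add: fm_def complex_eq_iff)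
  have 3: "e*d1*d2 = 0" using h[of 1 2] by (simp add: fm_def complex_eq_iff)
  have 4: "a*E2 + e*d1^2 = 0" using h[of 1 1] by (simp add: fm_def complex_eq_iff)
  have 5: "a*E2 + e*d2^2 = 0" using h[of 2 2] by (simp add: fm_def complex_eq_iff)
  have 6: "a*E1 - e*(d1^2+d2^2) = 0" using h[of 0 0] by (simp add: fm_def complex_eq_iff)
  have bc: "b = 0 \<and> c = 0" using 1 2 d by auto
  have e0: "e = 0"
  proof (rule ccontr)
    assume "e \<noteq> 0"
    then have "d1*d2 = 0" "d1^2 = d2^2" using 3 4 5 by (auto simp: algebra_simps)
    then show False using d by auto
  qed
  have "a = 0" using 4 6 e0 E by auto
  then show ?thesis using bc e0 by simp
qed

lemma lie_gen_sub: "S \<subseteq> lie_gen S" unfolding lie_gen_def by auto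
lemma lie_gen_min: "subspace L \<Longrightarrow> S \<subseteq> L \<Longrightarrow> (\<forall>A\<in>L. \<forall>B\<in>L. mcomm A B \<in> L) \<Longrightarrow> lie_gen S \<subseteq> L"
  unfolding lie_gen_def by auto
lemma lie_gen_subspace: "subspace (lie_gen S)"
  unfolding lie_gen_def subspace_def by auto
lemma lie_gen_comm: "A \<in> lie_gen S \<Longrightarrow> B \<in> lie_gen S \<Longrightarrow> mcomm A B \<in> lie_gen S"
  unfolding lie_gen_def by auto


definition psi1 :: "real \<Rightarrow> real \<Rightarrow> real \<Rightarrow> real \<Rightarrow> real \<Rightarrow> real \<Rightarrow> complex^2^2" where
"psi1 k q a b c e = (let w = e*q^2 + a*k/2 in (\<chi> i j.
   if i = 1 \<and> j = 1 then - \<i> * of_real w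
   else if i = 2 \<and> j = 2 then \<i> * of_real w
   else if i = 1 \<and> j = 2 then - \<i> * of_real (b*q) - of_real (c*q)
   else - \<i> * of_real (b*q) + of_real (c*q)))"

lemma psi1_br:
  "psi1 k q 0
     (-k*(a*c' - c*a') + 2*(q^2)*(c*e' - e*c'))
     (k*(a*b' - b*a') - 2*(q^2)*(b*e' - e*b'))
     (2*(b*c' - c*b')) = mcomm (psi1 k q a b c e) (psi1 k q a' b' c' e')"
  unfolding mcomm_def psi1_def Let_def
  apply (simp add: vec_eq_iff forall_2 sum_2 matrix_matrix_mult_def)
  apply (simp add: complex_eq_iff algebra_simps power2_eq_square)
  done

lemma psi1_lin: "x *\<^sub>R psi1 k q a b c e + y *\<^sub>R psi1 k q a' b' c' e'
   = psi1 k q (x*a+y*a') (x*b+y*b') (x*c+y*c') (x*e+y*e')"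
  unfolding psi1_def Let_def
  by (simp add: vec_eq_iff forall_2 complex_eq_iff algebra_simps)

lemma psi1_su: "psi1 k q a b c e \<in> su"
  unfolding psi1_def Let_def su_def
  by (simp add: vec_eq_iff forall_2 sum_2 complex_eq_iff)

lemma psi1_inj:
  assumes "q > 0" "psi1 k q a b c e = psi1 k q a' b' c' e'" "a = a'"
  shows "b = b' \<and> c = c' \<and> e = e'"
proof -
  have h: "\<And>i j. psi1 k q a b c e $ i $ j = psi1 k q a' b' c' e' $ i $ j" using assms by simp
  have 1: "b*q = b'*q" "c*q = c'*q" using h[of 1 2] by (simp_all add: psi1_def Let_def complex_eq_iff)
  have 2: "e*q^2 = e'*q^2" using h[of 1 1] assms(3) by (simp add: psi1_def Let_def complex_eq_iff)
  show ?thesis using 1 2 assms(1) by auto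
qed

lemma psi1_surj:
  assumes "A \<in> su" "b*q = - Im (A$1$2)" "c*q = - Re (A$1$2)" "e*q^2 + a*k/2 = - Im (A$1$1)"
  shows "psi1 k q a b c e = A"
proof -
  have cc: "\<And>i j. A$i$j = - cnj (A$j$i)" "A$1$1 + A$2$2 = 0" using assms(1) unfolding su_def sum_2 by blast+
  have r: "Re (A$1$1) = 0" using cc(1)[of 1 1] by (simp add: complex_eq_iff)
  have r2: "A$2$2 = - A$1$1" using cc(2) by (simp add: eq_neg_iff_add_eq_0 add.commute)
  have r3: "A$2$1 = - cnj (A$1$2)" by (rule cc(1))
  let ?w = "e*q^2 + a*k/2"
  have e: "psi1 k q a b c e $ i $ j =
     (if i = 1 \<and> j = 1 then - \<i> * of_real ?w
   else if i = 2 \<and> j = 2 then \<i> * of_real ?w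
   else if i = 1 \<and> j = 2 then - \<i> * of_real (b*q) - of_real (c*q)
   else - \<i> * of_real (b*q) + of_real (c*q))" for i j
    unfolding psi1_def Let_def by simp
  have 11: "psi1 k q a b c e $ 1 $ 1 = A$1$1" unfolding e using assms(4) r
    by (simp add: complex_eq_iff)
  have 22: "psi1 k q a b c e $ 2 $ 2 = A$2$2" unfolding e using assms(4) r r2
    by (simp add: complex_eq_iff)
  have 12: "psi1 k q a b c e $ 1 $ 2 = A$1$2" unfolding e using assms(2,3)
    by (simp add: complex_eq_iff)
  have 21: "psi1 k q a b c e $ 2 $ 1 = A$2$1" unfolding e using assms(2,3) r3
    by (simp add: complex_eq_iff)
  show ?thesis using 11 22 12 21 by (simp add: vec_eq_iff forall_2)
qed

lemma fm_add: "fm E1 E2 d1 d2 a b c e + fm E1 E2 d1 d2 a' b' c' e'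
   = fm E1 E2 d1 d2 (a+a') (b+b') (c+c') (e+e')"
  unfolding fm_def by (simp add: vec_eq_iff forall_3 complex_eq_iff algebra_simps)

lemma fm_sub: "fm E1 E2 d1 d2 a b c e - fm E1 E2 d1 d2 a' b' c' e'
   = fm E1 E2 d1 d2 (a-a') (b-b') (c-c') (e-e')"
  unfolding fm_def by (simp add: vec_eq_iff forall_3 complex_eq_iff algebra_simps)

lemma fm_scale: "x *\<^sub>R fm E1 E2 d1 d2 a b c e = fm E1 E2 d1 d2 (x*a) (x*b) (x*c) (x*e)"
  unfolding fm_def by (simp add: vec_eq_iff forall_3 complex_eq_iff algebra_simps)

lemma fm_12: "Re (fm E1 E2 d1 d2 a b c e $ 1 $ 2) = 0"
  unfolding fm_def by simp

theorem mainTheorem2: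
  fixes E1 E2 d1 d2 :: real
  assumes "E1 < E2" and "d1 \<noteq> 0 \<or> d2 \<noteq> 0"
  defines "HI \<equiv> cscale (- \<i>) (iHI d1 d2)"
  defines "L0 \<equiv> lie_gen {cscale \<i> (H0 E1 E2), iHI d1 d2}"
  shows "dim L0 = 4
    \<and> (\<exists>\<phi>. lie_iso_to \<phi> L0 su2_u1 su2_u1_bracket)
    \<and> \<not> (su :: (complex^3^3) set) \<subseteq> L0
    \<and> \<not> completely_controllable (H0 E1 E2) HI"
proof -
  define n2 where "n2 = d1^2 + d2^2"
  have n2pos: "n2 > 0" using assms(2) by (auto simp: n2_def sum_power2_gt_zero_iff)
  define q where "q = sqrt n2"
  have qpos: "q > 0" using n2pos by (simp add: q_def)
  have qsq: "q^2 = d1^2 + d2^2" using n2pos by (simp add: q_def n2_def)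
  define k where "k = E2 - E1"
  have kpos: "k > 0" using assms(1) by (simp add: k_def)
  define F :: "real \<times> real \<times> real \<times> real \<Rightarrow> complex^3^3"
    where "F = (\<lambda>(a,b,c,e). fm E1 E2 d1 d2 a b c e)"
  have Fp: "F (a,b,c,e) = fm E1 E2 d1 d2 a b c e" for a b c e by (simp add: F_def)
  have linF: "linear F"
  proof (rule linearI)
    fix x y :: "real \<times> real \<times> real \<times> real"
    show "F (x + y) = F x + F y"
      by (cases x rule: prod_cases4, cases y rule: prod_cases4) (simp add: Fp fm_add)
  next
    fix r and x :: "real \<times> real \<times> real \<times> real"
    show "F (r *\<^sub>R x) = r *\<^sub>R F x"
      by (cases x rule: prod_cases4) (simp add: Fp fm_scale)
  qed
  have injF: "inj F"
  proof (rule injI)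
    fix x y assume "F x = F y"
    then show "x = y"
    proof (cases x rule: prod_cases4, cases y rule: prod_cases4)
      fix a b c e a' b' c' e'
      assume xy: "F x = F y" "x = (a,b,c,e)" "y = (a',b',c',e')"
      then have "fm E1 E2 d1 d2 (a-a') (b-b') (c-c') (e-e') = 0"
        by (simp add: Fp fm_sub[symmetric])
      from fm_zero[OF assms(2) assms(1) this] show "x = y" using xy by simp
    qed
  qed
  have G: "cscale \<i> (H0 E1 E2) = F (1,0,0,0)" by (simp add: Fp gen_G)
  have X: "iHI d1 d2 = F (0,1,0,0)" by (simp add: Fp gen_X)
  have commF: "mcomm (F (a,b,c,e)) (F (a',b',c',e')) = F (0,
     (-k*(a*c' - c*a') + 2*(q^2)*(c*e' - e*c')),
     (k*(a*b' - b*a') - 2*(q^2)*(b*e' - e*b')),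
     (2*(b*c' - c*b')))" for a b c e a' b' c' e'
    unfolding Fp comm_fm qsq k_def by simp
  have subF: "subspace (range F)"
    unfolding subspace_def
  proof (intro conjI ballI allI)
    show "0 \<in> range F" using fm_0 Fp by (metis rangeI)
  next
    fix x y assume "x \<in> range F" "y \<in> range F"
    then obtain p p' where "x = F p" "y = F p'" by auto
    then have "x + y = F (p + p')" using linear_add[OF linF] by simp
    then show "x + y \<in> range F" by simp
  next
    fix r x assume "x \<in> range F"
    then obtain p where "x = F p" by auto
    then have "r *\<^sub>R x = F (r *\<^sub>R p)" using linear_scale[OF linF] by simp
    then show "r *\<^sub>R x \<in> range F" by simp
  qed
  have L0eq: "L0 = range F"
  proof
    show "L0 \<subseteq> range F" unfolding L0_def
    proof (rule lie_gen_min[OF subF])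
      show "{cscale \<i> (H0 E1 E2), iHI d1 d2} \<subseteq> range F" using G X by auto
      show "\<forall>A\<in>range F. \<forall>B\<in>range F. mcomm A B \<in> range F"
      proof (intro ballI)
        fix A B assume "A \<in> range F" "B \<in> range F"
        then obtain p p' where "A = F p" "B = F p'" by auto
        then show "mcomm A B \<in> range F"
          by (cases p rule: prod_cases4, cases p' rule: prod_cases4) (simp add: commF)
      qed
    qed
  next
    let ?L = "lie_gen {cscale \<i> (H0 E1 E2), iHI d1 d2}"
    have sL: "subspace ?L" by (rule lie_gen_subspace)
    have GL: "F (1,0,0,0) \<in> ?L" using lie_gen_sub G by (metis insert_subset)
    have XL: "F (0,1,0,0) \<in> ?L" using lie_gen_sub X by (metis insert_subset)
    have "mcomm (F (1,0,0,0)) (F (0,1,0,0)) = F (0,0,k,0)" by (simp add: commF)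
    then have "F (0,0,k,0) \<in> ?L" using lie_gen_comm[OF GL XL] by simp
    then have "(1/k) *\<^sub>R F (0,0,k,0) \<in> ?L" by (rule real_vector.subspace_scale[OF sL])
    then have YL: "F (0,0,1,0) \<in> ?L" using kpos by (simp add: Fp fm_scale)
    have "mcomm (F (0,1,0,0)) (F (0,0,1,0)) = F (0,0,0,2)" by (simp add: commF)
    then have "F (0,0,0,2) \<in> ?L" using lie_gen_comm[OF XL YL] by simp
    then have "(1/2) *\<^sub>R F (0,0,0,2) \<in> ?L" by (rule real_vector.subspace_scale[OF sL])
    then have WL: "F (0,0,0,1) \<in> ?L" by (simp add: Fp fm_scale)
    show "range F \<subseteq> L0" unfolding L0_def
    proof
      fix x assume "x \<in> range F"
      then obtain a b c e where x: "x = F (a,b,c,e)" by (metis prod_cases4 rangeE)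
      have "x = a *\<^sub>R F (1,0,0,0) + b *\<^sub>R F (0,1,0,0) + c *\<^sub>R F (0,0,1,0) + e *\<^sub>R F (0,0,0,1)"
        unfolding x by (simp add: Fp fm_scale fm_add)
      then show "x \<in> ?L"
        using GL XL YL WL sL
        by (simp add: real_vector.subspace_add real_vector.subspace_scale)
    qed
  qed
  have dimL0: "dim L0 = 4"
  proof -
    have "dim (F ` UNIV) = dim (UNIV :: (real \<times> real \<times> real \<times> real) set)"
      by (rule eucl.dim_image_eq[OF linF inj_on_subset[OF injF subset_UNIV]])
    then show ?thesis unfolding L0eq by simp
  qed
  define \<Psi> :: "real \<times> real \<times> real \<times> real \<Rightarrow> (complex^2^2) \<times> complex"
    where "\<Psi> = (\<lambda>(a,b,c,e). (psi1 k q a b c e, \<i> * of_real a))"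
  have Psip: "\<Psi> (a,b,c,e) = (psi1 k q a b c e, \<i> * of_real a)" for a b c e
    by (simp add: \<Psi>_def)
  define \<phi> where "\<phi> = \<Psi> \<circ> inv F"
  have phiF: "\<phi> (F p) = \<Psi> p" for p by (simp add: \<phi>_def injF)
  have injPsi: "inj \<Psi>"
  proof (rule injI)
    fix x y assume "\<Psi> x = \<Psi> y"
    then show "x = y"
    proof (cases x rule: prod_cases4, cases y rule: prod_cases4)
      fix a b c e a' b' c' e'
      assume xy: "\<Psi> x = \<Psi> y" "x = (a,b,c,e)" "y = (a',b',c',e')"
      have 12: "psi1 k q a b c e = psi1 k q a' b' c' e' \<and> \<i> * of_real a = \<i> * of_real a'"
        using xy(1) unfolding xy(2,3) Psip prod.inject .
      then have 1: "psi1 k q a b c e = psi1 k q a' b' c' e'" and 2: "a = a'" by auto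
      show "x = y" using psi1_inj[OF qpos 1 2] xy 2 by simp
    qed
  qed
  have rangePsi: "range \<Psi> = su2_u1"
  proof
    show "range \<Psi> \<subseteq> su2_u1"
    proof
      fix y assume "y \<in> range \<Psi>"
      then obtain a b c e where "y = \<Psi> (a,b,c,e)" by (metis prod_cases4 rangeE)
      then show "y \<in> su2_u1" by (simp add: Psip su2_u1_def u1_def psi1_su)
    qed
  next
    show "su2_u1 \<subseteq> range \<Psi>"
    proof
      fix y assume "y \<in> su2_u1"
      then obtain A z where y: "y = (A, z)" "A \<in> su" "Re z = 0" by (auto simp: su2_u1_def u1_def)
      define a where "a = Im z"
      define b where "b = - Im (A$1$2) / q"
      define c where "c = - Re (A$1$2) / q"
      define e where "e = (- Im (A$1$1) - a*k/2) / q^2"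
      have "psi1 k q a b c e = A"
        by (rule psi1_surj[OF y(2)]) (use qpos in \<open>simp_all add: b_def c_def e_def\<close>)
      moreover have "\<i> * of_real a = z" using y(3) by (simp add: a_def complex_eq_iff)
      ultimately have "\<Psi> (a,b,c,e) = y" by (simp add: Psip y(1))
      then show "y \<in> range \<Psi>" by (metis rangeI)
    qed
  qed
  have iso: "lie_iso_to \<phi> L0 su2_u1 su2_u1_bracket"
    unfolding lie_iso_to_def
  proof (intro conjI ballI allI)
    show "bij_betw \<phi> L0 su2_u1"
      unfolding bij_betw_def
    proof
      show "inj_on \<phi> L0" unfolding L0eq inj_on_def
        using injPsi by (auto simp: phiF inj_eq)
      show "\<phi> ` L0 = su2_u1" unfolding L0eq rangePsi[symmetric]
        by (simp only: image_image phiF)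
    qed
  next
    fix x y r s assume "x \<in> L0" "y \<in> L0"
    then obtain a b c e a' b' c' e' where x: "x = F (a,b,c,e)" and y: "y = F (a',b',c',e')"
      unfolding L0eq by (metis prod_cases4 rangeE)
    have "r *\<^sub>R x + s *\<^sub>R y = F (r*a+s*a', r*b+s*b', r*c+s*c', r*e+s*e')"
      unfolding x y by (simp add: Fp fm_lin)
    then have "\<phi> (r *\<^sub>R x + s *\<^sub>R y) = \<Psi> (r*a+s*a', r*b+s*b', r*c+s*c', r*e+s*e')"
      by (simp only: phiF)
    also have "\<dots> = r *\<^sub>R \<Psi> (a,b,c,e) + s *\<^sub>R \<Psi> (a',b',c',e')"
      unfolding Psip scaleR_Pair add_Pair psi1_lin by (simp add: complex_eq_iff)
    finally show "\<phi> (r *\<^sub>R x + s *\<^sub>R y) = r *\<^sub>R \<phi> x + s *\<^sub>R \<phi> y"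
      unfolding x y phiF .
  next
    fix x y assume "x \<in> L0" "y \<in> L0"
    then obtain a b c e a' b' c' e' where x: "x = F (a,b,c,e)" and y: "y = F (a',b',c',e')"
      unfolding L0eq by (metis prod_cases4 rangeE)
    show "\<phi> (mcomm x y) = su2_u1_bracket (\<phi> x) (\<phi> y)"
      unfolding x y commF phiF Psip su2_u1_bracket_def
      using psi1_br[where k=k and q=q and a=a and b=b and c=c and e=e and a'=a' and b'=b' and c'=c' and e'=e']
      by simp
  qed
  define M :: "complex^3^3" where "M = (\<chi> i j. if i = 1 \<and> j = 2 then 1 else if i = 2 \<and> j = 1 then -1 else 0)"
  have Msu: "M \<in> su" unfolding M_def su_def by (simp add: forall_3 sum_3)
  have MnL: "M \<notin> L0"
  proof
    assume "M \<in> L0"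
    then obtain a b c e where "M = F (a,b,c,e)" unfolding L0eq by (metis prod_cases4 rangeE)
    then have "Re (M $ 1 $ 2) = 0" using fm_12 by (simp add: Fp)
    then show False by (simp add: M_def)
  qed
  have nsu: "\<not> (su :: (complex^3^3) set) \<subseteq> L0" using Msu MnL by blast
  have "cscale \<i> HI = iHI d1 d2" unfolding HI_def cscale_def by (simp add: vec_eq_iff)
  then have "\<not> completely_controllable (H0 E1 E2) HI"
    using nsu unfolding completely_controllable_def L0_def by simp
  then show ?thesis using dimL0 iso nsu by blast
qed

end
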